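(* Let $X$ be an element of the tensor algebra over $\mathbb{R}^d$ with strictly positive radius of convergence $\rho(X)>0$, and suppose $\pi_n(X)\neq 0$ for some $n\ge 0$. Then for every integer $k\ge n+1$ there exists a linear map $M\in\mathcal{L}(\mathbb{R}^d;\mathfrak{t}(k,\mathbb{R}))$ such that the series defining $\Phi_X(M)$ converges and $\Phi_X(M)\neq 0$.
   Context: Elements of the tensor algebra are (formal) sequences $X=(\pi_0(X),\pi_1(X),\dots)$ with $\pi_n(X)\in(\mathbb{R}^d)^{\otimes n}$, $(\mathbb{R}^d)^{\otimes0}=\mathbb{R}$. $\mathbb{R}^d$ carries the $\ell_1$-norm and each $(\mathbb{R}^d)^{\otimes n}$ the projective tensor norm. The radius of convergence $\rho(X)$ is the radius of convergence of the complex power series $\lambda\mapsto\sum_{n\ge0}\|\pi_n(X)\|\lambda^n$. $\mathfrak{t}(k,\mathbb{R})$ is the space of real $k\times k$ matrices $M$ with $M+M^\top=0$ whose $(i,j)$-entry can be nonzero only if $|i-j|=1$ (tridiagonal antisymmetric matrices). For a linear map $M:\mathbb{R}^d\to\mathfrak{t}(k,\mathbb{R})\subset\mathfrak{gl}(k,\mathbb{C})$, $\widetilde M$ is the algebra homomorphism with $\widetilde M(1)=I_k$ and $\widetilde M(e_{i_1}\otimes\cdots\otimes e_{i_\ell})=M(e_{i_1})\cdots M(e_{i_\ell})$, and the generating function is $\Phi_X(M)=\sum_{n\ge0}\widetilde M(\pi_n(X))$ (Hilbert–Schmidt norm on matrices), defined when this series converges. *)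

theory Defs
  imports "HOL-Analysis.Analysis"
begin

text \<open>The basis of (R^d)^{tensor n} is indexed by words
  w of length n over the alphabet {0..<d}; a tensor of degree n is represented by
  its coefficient function on such words. An element X of the tensor algebra is
  represented by a coefficient function on all words; pi_n(X) is its restriction to
  words of length n.\<close>

definition words :: "nat \<Rightarrow> nat \<Rightarrow> nat list set" where
  "words d n = {w. length w = n \<and> set w \<subseteq> {..<d}}"

definition l1norm :: "nat \<Rightarrow> (nat \<Rightarrow> real) \<Rightarrow> real" where
  "l1norm d x = (\<Sum>i<d. \<bar>x i\<bar>)"

definition proj_norm :: "nat \<Rightarrow> nat \<Rightarrow> (nat list \<Rightarrow> real) \<Rightarrow> real" where
  "proj_norm d n T = Inf {(\<Sum>j<r. \<bar>c j\<bar> * (\<Prod>m<n. l1norm d (v j m))) | (r::nat) c v.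
      \<forall>w\<in>words d n. T w = (\<Sum>j<r. c j * (\<Prod>m<n. v j m (w ! m)))}"

definition radius :: "nat \<Rightarrow> (nat list \<Rightarrow> real) \<Rightarrow> ereal" where
  "radius d X = conv_radius (\<lambda>n. complex_of_real (proj_norm d n X))"

text \<open>k x k real matrices as functions on {0..<k} x {0..<k}.\<close>
definition matmul :: "nat \<Rightarrow> (nat \<Rightarrow> nat \<Rightarrow> real) \<Rightarrow> (nat \<Rightarrow> nat \<Rightarrow> real) \<Rightarrow> nat \<Rightarrow> nat \<Rightarrow> real" where
  "matmul k A B = (\<lambda>i j. \<Sum>l<k. A i l * B l j)"

definition matid :: "nat \<Rightarrow> nat \<Rightarrow> real" where
  "matid = (\<lambda>i j. if i = j then 1 else 0)"

definition hs_norm :: "nat \<Rightarrow> (nat \<Rightarrow> nat \<Rightarrow> real) \<Rightarrow> real" where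
  "hs_norm k A = sqrt (\<Sum>i<k. \<Sum>j<k. (A i j)\<^sup>2)"

definition in_t :: "nat \<Rightarrow> (nat \<Rightarrow> nat \<Rightarrow> real) \<Rightarrow> bool" where
  "in_t k A \<longleftrightarrow> (\<forall>a<k. \<forall>b<k. A a b + A b a = 0 \<and>
                       (A a b \<noteq> 0 \<longrightarrow> a = b + 1 \<or> b = a + 1))"

text \<open>A linear map M : R^d -> t(k,R) is given by the images M i of the basis vectors e_i, i<d.\<close>
definition lin_to_t :: "nat \<Rightarrow> nat \<Rightarrow> (nat \<Rightarrow> nat \<Rightarrow> nat \<Rightarrow> real) \<Rightarrow> bool" where
  "lin_to_t d k M \<longleftrightarrow> (\<forall>i<d. in_t k (M i))"

text \<open>M~(e_{i1} tensor ... tensor e_{il}) = M(e_{i1}) ... M(e_{il}), M~(1) = I_k.\<close>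
definition word_mat :: "nat \<Rightarrow> (nat \<Rightarrow> nat \<Rightarrow> nat \<Rightarrow> real) \<Rightarrow> nat list \<Rightarrow> nat \<Rightarrow> nat \<Rightarrow> real" where
  "word_mat k M w = foldr (\<lambda>a acc. matmul k (M a) acc) w matid"

definition Mtilde_pi :: "nat \<Rightarrow> nat \<Rightarrow> (nat \<Rightarrow> nat \<Rightarrow> nat \<Rightarrow> real) \<Rightarrow> (nat list \<Rightarrow> real) \<Rightarrow> nat \<Rightarrow> nat \<Rightarrow> nat \<Rightarrow> real" where
  "Mtilde_pi d k M X n = (\<lambda>i j. \<Sum>w\<in>words d n. X w * word_mat k M w i j)"

definition Phi_sums :: "nat \<Rightarrow> nat \<Rightarrow> (nat list \<Rightarrow> real) \<Rightarrow> (nat \<Rightarrow> nat \<Rightarrow> nat \<Rightarrow> real) \<Rightarrow> (nat \<Rightarrow> nat \<Rightarrow> real) \<Rightarrow> bool" where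
  "Phi_sums d k X M L \<longleftrightarrow>
     (\<lambda>N. hs_norm k (\<lambda>i j. (\<Sum>n<N. Mtilde_pi d k M X n i j) - L i j)) \<longlonglongrightarrow> 0"

end

theory Submission
  imports Defs "HOL-Complex_Analysis.Cauchy_Integral_Formula"
begin


definition Amat :: "nat \<Rightarrow> nat list \<Rightarrow> nat \<Rightarrow> nat \<Rightarrow> nat \<Rightarrow> real" where
 "Amat n w0 a i j = (if j = Suc i \<and> i < n \<and> w0!i = a then 1
     else if i = Suc j \<and> j < n \<and> w0!j = a then -1 else 0)"

lemma word_mat_Nil[simp]: "word_mat k M [] = matid"
  by (simp add: word_mat_def)

lemma word_mat_Cons[simp]: "word_mat k M (a#w) = matmul k (M a) (word_mat k M w)"
  by (simp add: word_mat_def)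

lemma word_mat_band:
  assumes "\<And>a i q. M a i q \<noteq> 0 \<Longrightarrow> q \<le> Suc i"
  shows "j > i + length w \<Longrightarrow> word_mat k M w i j = 0"
proof (induction w arbitrary: i)
  case Nil then show ?case by (simp add: matid_def)
next
  case (Cons a w)
  have zz: "M a i q * word_mat k M w q j = 0" for q
  proof (cases "M a i q = 0")
    case False
    then have "q \<le> Suc i" using assms by blast
    then have "word_mat k M w q j = 0" using Cons by (intro Cons.IH) auto
    then show ?thesis by simp
  qed simp
  show ?case unfolding word_mat_Cons matmul_def by (rule sum.neutral) (use zz in blast)
qed

lemma Amat_band: "Amat n w0 a i q \<noteq> 0 \<Longrightarrow> q \<le> Suc i"
  by (auto simp: Amat_def split: if_splits)

lemma word_mat_path:
  "length w + p \<le> n \<Longrightarrow> n < k \<Longrightarrow>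
   word_mat k (Amat n w0) w p (p + length w) = (if (\<forall>m<length w. w!m = w0!(p+m)) then 1 else 0)"
proof (induction w arbitrary: p)
  case Nil then show ?case by (simp add: matid_def)
next
  case (Cons a w)
  let ?W = "word_mat k (Amat n w0) w"
  have z: "Amat n w0 a p q * ?W q (p + length (a#w)) = 0" if "q \<noteq> Suc p" for q
  proof (cases "Amat n w0 a p q = 0")
    case False
    then have "p = Suc q" using that by (auto simp: Amat_def split: if_splits)
    then have "?W q (p + length (a#w)) = 0"
      by (intro word_mat_band[OF Amat_band]) auto
    then show ?thesis by simp
  qed simp
  have sk: "Suc p < k" using Cons.prems by auto
  have "word_mat k (Amat n w0) (a#w) p (p + length (a#w))
      = (\<Sum>q<k. Amat n w0 a p q * ?W q (p + length (a#w)))"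
    by (simp add: matmul_def)
  also have "\<dots> = Amat n w0 a p (Suc p) * ?W (Suc p) (p + length (a#w))"
  proof -
    have "(\<Sum>q\<in>{..<k} - {Suc p}. Amat n w0 a p q * ?W q (p + length (a#w))) = 0"
      by (rule sum.neutral) (use z in blast)
    then show ?thesis using sk by (subst sum.remove[of _ "Suc p"]) auto
  qed
  also have "?W (Suc p) (p + length (a#w)) = ?W (Suc p) (Suc p + length w)" by simp
  also have "\<dots> = (if (\<forall>m<length w. w!m = w0!(Suc p+m)) then 1 else 0)"
    using Cons.prems by (intro Cons.IH) auto
  also have "Amat n w0 a p (Suc p) = (if w0!p = a then 1 else 0)"
    using Cons.prems by (auto simp: Amat_def)
  finally show ?case
    apply (auto simp: less_Suc_eq_0_disj)
    done
qed

lemma word_mat_bound: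
  assumes "\<And>a i q. \<bar>M a i q\<bar> \<le> 1"
  shows "\<bar>word_mat k M w i j\<bar> \<le> real k ^ length w"
proof (induction w arbitrary: i j)
  case Nil then show ?case by (simp add: matid_def)
next
  case (Cons a w)
  have "\<bar>matmul k (M a) (word_mat k M w) i j\<bar> \<le> (\<Sum>q<k. \<bar>M a i q * word_mat k M w q j\<bar>)"
    unfolding matmul_def by (rule sum_abs)
  also have "\<dots> \<le> (\<Sum>q<k. real k ^ length w)"
  proof (rule sum_mono)
    fix q
    have "\<bar>M a i q\<bar> * \<bar>word_mat k M w q j\<bar> \<le> 1 * real k ^ length w"
      by (rule mult_mono) (use assms Cons.IH in auto)
    then show "\<bar>M a i q * word_mat k M w q j\<bar> \<le> real k ^ length w" by (simp add: abs_mult)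
  qed
  finally show ?case by simp
qed

lemma word_mat_scale:
  "word_mat k (\<lambda>a i j. t * M a i j) w i j = t ^ length w * word_mat k M w i j"
proof (induction w arbitrary: i j)
  case Nil then show ?case by simp
next
  case (Cons a w)
  show ?case by (simp add: matmul_def Cons.IH sum_distrib_left mult_ac)
qed

lemma Mtilde_scale:
  "Mtilde_pi d k (\<lambda>a i j. t * M a i j) X m i j = t ^ m * Mtilde_pi d k M X m i j"
  by (simp add: Mtilde_pi_def word_mat_scale words_def sum_distrib_left mult_ac)



lemma prod_ind: "(\<Prod>m<(n::nat). if P m then (1::real) else 0) = (if \<forall>m<n. P m then 1 else 0)"
  by (induction n) (auto simp: less_Suc_eq)

lemma words_finite: "finite (words d n)"
  unfolding words_def using finite_lists_length_eq[of "{..<d}" n] by (simp add: conj_commute)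

lemma words_card: "card (words d n) = d ^ n"
  unfolding words_def using card_lists_length_eq[of "{..<d}" n] by (simp add: conj_commute)

lemma proj_ge:
  assumes w: "w \<in> words d n"
  shows "\<bar>X w\<bar> \<le> proj_norm d n X"
  unfolding proj_norm_def
proof (rule cInf_greatest)
  obtain h where h: "bij_betw h {0..<card (words d n)} (words d n)"
    using ex_bij_betw_nat_finite[OF words_finite] by blast
  have "\<forall>u\<in>words d n. X u = (\<Sum>j<card (words d n). X (h j) * (\<Prod>m<n. (\<lambda>i. if i = h j ! m then 1 else 0) (u ! m)))"
  proof
    fix u assume u: "u \<in> words d n"
    have eq: "(\<forall>m<n. u ! m = h j ! m) = (u = h j)" if "j < card (words d n)" for j
    proof -
      have "h j \<in> words d n" using h that by (auto simp: bij_betw_def)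
      then show ?thesis using u by (auto simp: words_def list_eq_iff_nth_eq)
    qed
    have "(\<Sum>j<card (words d n). X (h j) * (\<Prod>m<n. (\<lambda>i. if i = h j ! m then 1 else 0) (u ! m)))
        = (\<Sum>j\<in>{0..<card (words d n)}. (\<lambda>v. if u = v then X v else 0) (h j))"
    proof (intro sum.cong)
      fix j assume j: "j \<in> {0..<card (words d n)}"
      have "(\<Prod>m<n. (\<lambda>i. if i = h j ! m then 1 else 0) (u ! m)) = (if \<forall>m<n. u ! m = h j ! m then (1::real) else 0)"
        using prod_ind[where n=n and P="\<lambda>m. u ! m = h j ! m"] by simp
      also have "\<dots> = (if u = h j then 1 else 0)" using eq j by simp
      finally show "X (h j) * (\<Prod>m<n. (\<lambda>i. if i = h j ! m then 1 else 0) (u ! m)) = (\<lambda>v. if u = v then X v else 0) (h j)"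
        by simp
    qed (simp add: atLeast0LessThan)
    also have "\<dots> = (\<Sum>v\<in>words d n. if u = v then X v else 0)"
      using sum.reindex_bij_betw[OF h, of "\<lambda>v. if u = v then X v else 0"] by simp
    also have "\<dots> = X u" using u words_finite by (simp add: sum.delta)
    finally show "X u = (\<Sum>j<card (words d n). X (h j) * (\<Prod>m<n. (\<lambda>i. if i = h j ! m then 1 else 0) (u ! m)))" by simp
  qed
  then show "{(\<Sum>j<r. \<bar>c j\<bar> * (\<Prod>m<n. l1norm d (v j m))) | (r::nat) c v.
      \<forall>w\<in>words d n. X w = (\<Sum>j<r. c j * (\<Prod>m<n. v j m (w ! m)))} \<noteq> {}"
  proof -
    assume rep: "\<forall>u\<in>words d n. X u = (\<Sum>j<card (words d n). X (h j) * (\<Prod>m<n. (\<lambda>i. if i = h j ! m then 1 else 0) (u ! m)))"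
    have "(\<Sum>j<card (words d n). \<bar>X (h j)\<bar> * (\<Prod>m<n. l1norm d (\<lambda>i. if i = h j ! m then 1 else 0))) \<in> {(\<Sum>j<r. \<bar>c j\<bar> * (\<Prod>m<n. l1norm d (v j m))) | (r::nat) c v.
      \<forall>w\<in>words d n. X w = (\<Sum>j<r. c j * (\<Prod>m<n. v j m (w ! m)))}"
      apply (rule CollectI)
      apply (rule exI[of _ "card (words d n)"])
      apply (rule exI[of _ "\<lambda>j. X (h j)"])
      apply (rule exI[of _ "\<lambda>j m i. if i = h j ! m then 1 else 0"])
      using rep by simp
    then show ?thesis by (metis empty_iff)
  qed
next
  fix x assume "x \<in> {(\<Sum>j<r. \<bar>c j\<bar> * (\<Prod>m<n. l1norm d (v j m))) | (r::nat) c v.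
      \<forall>w\<in>words d n. X w = (\<Sum>j<r. c j * (\<Prod>m<n. v j m (w ! m)))}"
  then obtain r :: nat and c v where x: "x = (\<Sum>j<r. \<bar>c j\<bar> * (\<Prod>m<n. l1norm d (v j m)))"
    and rep: "\<forall>w\<in>words d n. X w = (\<Sum>j<r. c j * (\<Prod>m<n. v j m (w ! m)))" by blast
  have "\<bar>X w\<bar> = \<bar>\<Sum>j<r. c j * (\<Prod>m<n. v j m (w ! m))\<bar>" using rep w by simp
  also have "\<dots> \<le> (\<Sum>j<r. \<bar>c j * (\<Prod>m<n. v j m (w ! m))\<bar>)" by (rule sum_abs)
  also have "\<dots> \<le> x" unfolding x
  proof (rule sum_mono)
    fix j
    have "(\<Prod>m<n. \<bar>v j m (w ! m)\<bar>) \<le> (\<Prod>m<n. l1norm d (v j m))"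
    proof (rule prod_mono)
      fix m assume "m \<in> {..<n}"
      then have "w ! m < d" using w by (auto simp: words_def dest!: nth_mem)
      then show "0 \<le> \<bar>v j m (w ! m)\<bar> \<and> \<bar>v j m (w ! m)\<bar> \<le> l1norm d (v j m)"
        unfolding l1norm_def
        by (intro conjI abs_ge_zero member_le_sum[where f="\<lambda>i. \<bar>v j m i\<bar>"]) auto
    qed
    then show "\<bar>c j * (\<Prod>m<n. v j m (w ! m))\<bar> \<le> \<bar>c j\<bar> * (\<Prod>m<n. l1norm d (v j m))"
      unfolding abs_mult abs_prod by (rule mult_left_mono) simp_all
  qed
  finally show "\<bar>X w\<bar> \<le> x" .
qed

lemma Mtilde_bound:
  assumes "\<And>a i q. \<bar>M a i q\<bar> \<le> 1"
  shows "\<bar>Mtilde_pi d k M X m i j\<bar> \<le> (real k * real d) ^ m * \<bar>proj_norm d m X\<bar>"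
proof -
  have "\<bar>Mtilde_pi d k M X m i j\<bar> \<le> (\<Sum>w\<in>words d m. \<bar>X w * word_mat k M w i j\<bar>)"
    unfolding Mtilde_pi_def by (rule sum_abs)
  also have "\<dots> \<le> (\<Sum>w\<in>words d m. \<bar>proj_norm d m X\<bar> * real k ^ m)"
  proof (rule sum_mono)
    fix w assume w: "w \<in> words d m"
    have "\<bar>X w\<bar> * \<bar>word_mat k M w i j\<bar> \<le> \<bar>proj_norm d m X\<bar> * real k ^ m"
      using proj_ge[OF w, of X] word_mat_bound[OF assms, where k=k and w=w and i=i and j=j] w
      by (intro mult_mono) (auto simp: words_def)
    then show "\<bar>X w * word_mat k M w i j\<bar> \<le> \<bar>proj_norm d m X\<bar> * real k ^ m" by (simp add: abs_mult)
  qed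
  also have "\<dots> = (real k * real d) ^ m * \<bar>proj_norm d m X\<bar>"
    by (simp add: words_card power_mult_distrib)
  finally show ?thesis .
qed

lemma Amat_abs: "\<bar>Amat n w0 a i q\<bar> \<le> 1"
  by (auto simp: Amat_def)

lemma Amat_t: "in_t k (Amat n w0 a)"
  by (auto simp: in_t_def Amat_def)

lemma Amat_entry:
  assumes w0: "w0 \<in> words d n" and "n < k"
  shows "Mtilde_pi d k (Amat n w0) X n 0 n = X w0"
proof -
  have "Mtilde_pi d k (Amat n w0) X n 0 n = (\<Sum>w\<in>words d n. if w0 = w then X w else 0)"
    unfolding Mtilde_pi_def
  proof (intro sum.cong refl)
    fix w assume w: "w \<in> words d n"
    then have "word_mat k (Amat n w0) w 0 (0 + length w) = (if (\<forall>m<length w. w!m = w0!(0+m)) then 1 else 0)"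
      using assms by (intro word_mat_path) (auto simp: words_def)
    moreover have "(\<forall>m<length w. w!m = w0!(0+m)) = (w0 = w)"
      using w w0 by (auto simp: words_def list_eq_iff_nth_eq)
    ultimately show "X w * word_mat k (Amat n w0) w 0 n = (if w0 = w then X w else 0)"
      using w by (simp add: words_def)
  qed
  also have "\<dots> = X w0" using w0 words_finite by (simp add: sum.delta)
  finally show ?thesis .
qed



theorem corollary1p9:
  fixes d n k :: nat and X :: "nat list \<Rightarrow> real"
  assumes "radius d X > 0"
    and "\<exists>w\<in>words d n. X w \<noteq> 0"
    and "k \<ge> n + 1"
  shows "\<exists>M. lin_to_t d k M \<and>
           (\<exists>L. Phi_sums d k X M L \<and> (\<exists>i<k. \<exists>j<k. L i j \<noteq> 0))"
proof -
  obtain w0 where w0: "w0 \<in> words d n" "X w0 \<noteq> 0" using assms(2) by blast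
  have nk: "n < k" using assms(3) by simp
  define A where "A = Amat n w0"
  define B where "B m i j = Mtilde_pi d k A X m i j" for m i j
  define p where "p m = proj_norm d m X" for m
  have rad: "0 < conv_radius (\<lambda>m. complex_of_real (p m))"
    using assms(1) by (simp add: radius_def p_def)
  obtain r :: real where r: "0 < r" "ereal r < conv_radius (\<lambda>m. complex_of_real (p m))"
  proof (cases "conv_radius (\<lambda>m. complex_of_real (p m))")
    case (real R)
    then show ?thesis using rad that[of "R/2"] by auto
  next
    case PInf
    then show ?thesis using that[of 1] by auto
  next
    case MInf
    then show ?thesis using rad by auto
  qed
  have "summable (\<lambda>m. norm (complex_of_real (p m) * complex_of_real r ^ m))"
    by (rule abs_summable_in_conv_radius) (use r in simp)
  then have sp: "summable (\<lambda>m. \<bar>p m\<bar> * r ^ m)"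
    using r by (simp add: norm_mult norm_power)
  define K where "K = real k * real d + 1"
  have K: "K \<ge> 1" by (simp add: K_def)
  define R0 where "R0 = r / K"
  have R0: "R0 > 0" using r K by (simp add: R0_def)
  have Bb: "\<bar>B m i j\<bar> \<le> K ^ m * \<bar>p m\<bar>" for m i j
  proof -
    have "\<bar>B m i j\<bar> \<le> (real k * real d) ^ m * \<bar>p m\<bar>"
      unfolding B_def p_def A_def by (rule Mtilde_bound[OF Amat_abs])
    also have "\<dots> \<le> K ^ m * \<bar>p m\<bar>"
      by (intro mult_right_mono power_mono) (auto simp: K_def)
    finally show ?thesis .
  qed
  have summ: "summable (\<lambda>m. t ^ m * B m i j)" if t: "\<bar>t\<bar> \<le> R0" for t i j
  proof (rule summable_comparison_test'[OF sp])
    fix m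
    have tK: "\<bar>t\<bar> * K \<le> r" using t K by (simp add: R0_def field_simps)
    have "\<bar>t ^ m * B m i j\<bar> \<le> \<bar>t\<bar> ^ m * (K ^ m * \<bar>p m\<bar>)"
      unfolding abs_mult power_abs by (intro mult_left_mono Bb) simp
    also have "\<dots> = (\<bar>t\<bar> * K) ^ m * \<bar>p m\<bar>" by (simp add: power_mult_distrib)
    also have "\<dots> \<le> r ^ m * \<bar>p m\<bar>"
      using tK K by (intro mult_right_mono power_mono) auto
    finally show "norm (t ^ m * B m i j) \<le> \<bar>p m\<bar> * r ^ m" by (simp add: mult_ac)
  qed
  define f where "f x = (\<Sum>m. B m 0 n * x ^ m)" for x
  have cn: "B n 0 n \<noteq> 0"
    unfolding B_def A_def using Amat_entry[OF w0(1) nk, of X] w0(2) by simp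
  obtain t where t: "\<bar>t\<bar> \<le> R0" "f t \<noteq> 0"
  proof (cases "B 0 0 n = 0")
    case False
    have "f 0 = B 0 0 n" unfolding f_def by (rule powser_zero)
    then show ?thesis using that[of 0] R0 False by simp
  next
    case True
    then have npos: "n > 0" using cn by (cases n) auto
    have "f 0 = 0" unfolding f_def using powser_zero[of "\<lambda>m. B m 0 n"] True by simp
    have sm: "(\<lambda>m. B m 0 n * (x - 0) ^ m) sums (f x)" if "norm (x - 0) < R0" for x
    proof -
      have "summable (\<lambda>m. x ^ m * B m 0 n)" using that by (intro summ) simp
      then have "summable (\<lambda>m. B m 0 n * x ^ m)" by (simp add: mult_ac)
      then show ?thesis unfolding f_def by (simp add: summable_sums)
    qed
    obtain s where s: "0 < s" "\<And>z. z \<in> cball 0 s - {0} \<Longrightarrow> f z \<noteq> 0"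
      using powser_0_nonzero[of R0 0 "\<lambda>m. B m 0 n" f n, OF R0 sm \<open>f 0 = 0\<close> cn npos] by blast
    have "min s (R0/2) \<in> cball 0 s - {0}" using s R0 by auto
    then show ?thesis using that[of "min s (R0/2)"] s R0 by auto
  qed
  define M where "M = (\<lambda>a i j. t * A a i j)"
  define L where "L i j = (\<Sum>m. t ^ m * B m i j)" for i j
  have "lin_to_t d k M"
    using Amat_t[of k n w0] unfolding lin_to_t_def M_def A_def in_t_def
    by (auto simp flip: distrib_left)
  moreover have "L 0 n \<noteq> 0"
    using t(2) unfolding L_def f_def by (simp add: mult_ac)
  moreover have "Phi_sums d k X M L"
  proof -
    have conv: "(\<lambda>N. \<Sum>m<N. t ^ m * B m i j) \<longlonglongrightarrow> L i j" for i j
      unfolding L_def by (rule summable_LIMSEQ[OF summ[OF t(1)]])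
    have eq: "Mtilde_pi d k M X m i j = t ^ m * B m i j" for m i j
      unfolding M_def B_def by (rule Mtilde_scale)
    have "(\<lambda>N. hs_norm k (\<lambda>i j. (\<Sum>m<N. t ^ m * B m i j) - L i j))
          \<longlonglongrightarrow> sqrt (\<Sum>i<k. \<Sum>j<k. (L i j - L i j)\<^sup>2)"
      unfolding hs_norm_def by (intro tendsto_intros conv)
    then show ?thesis unfolding Phi_sums_def eq by simp
  qed
  moreover have "0 < k" using nk by simp
  ultimately show ?thesis using nk by blast
qed

end
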